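(* If $K\subset\mathbb{X}$ is compact, then $\eta(K)=0$ if and only if $\lim_{\varepsilon\to0}\tau(B_\varepsilon(K))=0$.
   Context: $\mathbb{X}$ is a compact metric space. $(\xi_j)_{j\in\mathbb N}$ is a sequence of finitely additive outer probabilities on $\mathbb{X}$ (set functions on all subsets, values in $[0,1]$, finitely additive, $\xi_j(\mathbb{X})=1$). For $A\subset\mathbb{X}$, $\tau(A)=\limsup_{n\to\infty}\frac1n\sum_{j=0}^{n-1}\xi_j(A)$. For $Y\subset\mathbb{X}$ and $r>0$, $\nu_r(Y)=\inf\sum_{I\in\mathcal I}\tau(I)$ over all countable covers $\mathcal I$ of $Y$ by open sets of diameter at most $r$; $\nu(Y)=\sup_{r>0}\nu_r(Y)$; $\eta$ is the restriction of $\nu$ to the Borel $\sigma$-algebra (a countably additive Borel measure). $B_\varepsilon(K)$ is the open $\varepsilon$-neighborhood of $K$. *)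

theory Defs
  imports "HOL-Analysis.Analysis"
begin

definition fa_outer_prob :: "('a set \<Rightarrow> real) \<Rightarrow> bool" where
  "fa_outer_prob \<xi> \<longleftrightarrow>
     (\<forall>A. 0 \<le> \<xi> A \<and> \<xi> A \<le> 1) \<and>
     (\<forall>A B. A \<inter> B = {} \<longrightarrow> \<xi> (A \<union> B) = \<xi> A + \<xi> B) \<and>
     \<xi> UNIV = 1"

text \<open>tau(A) = limsup_n (1/n) sum_{j<n} xi_j(A); the averages lie in [0,1], so the
  (ereal) limsup is finite and we take its real value.\<close>
definition tau :: "(nat \<Rightarrow> 'a set \<Rightarrow> real) \<Rightarrow> 'a set \<Rightarrow> real" where
  "tau \<xi> A = real_of_ereal
     (limsup (\<lambda>n. ereal ((1 / real n) * (\<Sum>j<n. \<xi> j A))))"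

definition nu_r :: "(nat \<Rightarrow> 'a::metric_space set \<Rightarrow> real) \<Rightarrow> real \<Rightarrow> 'a set \<Rightarrow> ennreal" where
  "nu_r \<xi> r Y = Inf { (\<Sum>\<^sub>\<infinity> I\<in>\<I>. ennreal (tau \<xi> I)) | \<I>.
       countable \<I> \<and> (\<forall>I\<in>\<I>. open I \<and> diameter I \<le> r) \<and> Y \<subseteq> \<Union>\<I> }"

definition nu :: "(nat \<Rightarrow> 'a::metric_space set \<Rightarrow> real) \<Rightarrow> 'a set \<Rightarrow> ennreal" where
  "nu \<xi> Y = (SUP r\<in>{0<..}. nu_r \<xi> r Y)"

definition eta :: "(nat \<Rightarrow> 'a::metric_space set \<Rightarrow> real) \<Rightarrow> 'a set \<Rightarrow> ennreal" where
  "eta \<xi> A = (if A \<in> sets borel then nu \<xi> A else 0)"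

definition nbhd :: "real \<Rightarrow> 'a::metric_space set \<Rightarrow> 'a set" where
  "nbhd \<epsilon> K = {x. \<exists>k\<in>K. dist x k < \<epsilon>}"

end

theory Submission
  imports Defs
begin

lemma fa_empty: assumes "fa_outer_prob m" shows "m {} = 0"
  using assms unfolding fa_outer_prob_def by (metis Un_empty inf_bot_left add_cancel_left_left)

lemma fa_mono: assumes "fa_outer_prob m" "A \<subseteq> B" shows "m A \<le> m B"
proof -
  have "m B = m A + m (B - A)" using assms unfolding fa_outer_prob_def
    by (metis Diff_disjoint Un_Diff_cancel2 sup.absorb_iff1 sup_commute)
  moreover have "0 \<le> m (B - A)" using assms unfolding fa_outer_prob_def by auto
  ultimately show ?thesis by simp
qed

lemma fa_sub: assumes "fa_outer_prob m" shows "m (A \<union> B) \<le> m A + m B"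
proof -
  have "m (A \<union> B) = m A + m (B - A)" using assms unfolding fa_outer_prob_def
    by (metis Diff_disjoint Un_Diff_cancel)
  moreover have "m (B - A) \<le> m B" using fa_mono[OF assms] by auto
  ultimately show ?thesis by simp
qed

definition avg :: "(nat \<Rightarrow> 'a set \<Rightarrow> real) \<Rightarrow> 'a set \<Rightarrow> nat \<Rightarrow> real" where
  "avg \<xi> A n = (1 / real n) * (\<Sum>j<n. \<xi> j A)"

lemma avg_bounds:
  assumes "\<And>j. fa_outer_prob (\<xi> j)" shows "0 \<le> avg \<xi> A n" "avg \<xi> A n \<le> 1"
proof -
  have b: "0 \<le> \<xi> j A" "\<xi> j A \<le> 1" for j using assms[of j] unfolding fa_outer_prob_def by auto
  have s0: "0 \<le> (\<Sum>j<n. \<xi> j A)" using b by (simp add: sum_nonneg)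
  have s1: "(\<Sum>j<n. \<xi> j A) \<le> real n" using sum_mono[of "{..<n}" "\<lambda>j. \<xi> j A" "\<lambda>_. 1"] b by simp
  show "0 \<le> avg \<xi> A n" unfolding avg_def using s0 by simp
  show "avg \<xi> A n \<le> 1" unfolding avg_def using s1
    by (cases "n = 0") (auto simp: field_simps)
qed

lemma limsup_bounds:
  assumes "\<And>j. fa_outer_prob (\<xi> j)"
  shows "0 \<le> limsup (\<lambda>n. ereal (avg \<xi> A n))" "limsup (\<lambda>n. ereal (avg \<xi> A n)) \<le> 1"
proof -
  show "0 \<le> limsup (\<lambda>n. ereal (avg \<xi> A n))"
    by (rule le_Limsup) (auto simp: avg_bounds[OF assms])
  show "limsup (\<lambda>n. ereal (avg \<xi> A n)) \<le> 1"
    by (rule Limsup_bounded) (auto simp: avg_bounds[OF assms])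
qed

lemma tau_eq:
  assumes "\<And>j. fa_outer_prob (\<xi> j)"
  shows "limsup (\<lambda>n. ereal (avg \<xi> A n)) = ereal (tau \<xi> A)"
proof -
  have "tau \<xi> A = real_of_ereal (limsup (\<lambda>n. ereal (avg \<xi> A n)))"
    unfolding tau_def avg_def by simp
  moreover have "\<bar>limsup (\<lambda>n. ereal (avg \<xi> A n))\<bar> \<noteq> \<infinity>"
    using limsup_bounds[of \<xi> A, OF assms] by auto
  ultimately show ?thesis using ereal_real by auto
qed

lemma tau_nonneg: assumes "\<And>j. fa_outer_prob (\<xi> j)" shows "0 \<le> tau \<xi> A"
  using limsup_bounds(1)[of \<xi> A, OF assms] tau_eq[of \<xi> A, OF assms] by simp

lemma tau_mono: assumes "\<And>j. fa_outer_prob (\<xi> j)" "A \<subseteq> B" shows "tau \<xi> A \<le> tau \<xi> B"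
proof -
  have "avg \<xi> A n \<le> avg \<xi> B n" for n
    unfolding avg_def using fa_mono[OF assms(1) assms(2)]
    by (intro mult_left_mono sum_mono) auto
  then have "limsup (\<lambda>n. ereal (avg \<xi> A n)) \<le> limsup (\<lambda>n. ereal (avg \<xi> B n))"
    by (intro Limsup_mono) auto
  then show ?thesis using tau_eq[OF assms(1)] by simp
qed

lemma tau_sub: assumes "\<And>j. fa_outer_prob (\<xi> j)" shows "tau \<xi> (A \<union> B) \<le> tau \<xi> A + tau \<xi> B"
proof -
  have "avg \<xi> (A \<union> B) n \<le> avg \<xi> A n + avg \<xi> B n" for n
  proof -
    have "(\<Sum>j<n. \<xi> j (A \<union> B)) \<le> (\<Sum>j<n. \<xi> j A + \<xi> j B)"
      using fa_sub[OF assms] by (intro sum_mono) auto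
    then show ?thesis unfolding avg_def by (simp add: sum.distrib divide_right_mono
       flip: add_divide_distrib)
  qed
  then have "limsup (\<lambda>n. ereal (avg \<xi> (A \<union> B) n)) \<le> limsup (\<lambda>n. ereal (avg \<xi> A n) + ereal (avg \<xi> B n))"
    by (intro Limsup_mono) auto
  also have "\<dots> \<le> limsup (\<lambda>n. ereal (avg \<xi> A n)) + limsup (\<lambda>n. ereal (avg \<xi> B n))"
    by (rule ereal_limsup_add_mono)
  finally show ?thesis using tau_eq[OF assms] by simp
qed

lemma tau_empty: assumes "\<And>j. fa_outer_prob (\<xi> j)" shows "tau \<xi> {} = 0"
  unfolding tau_def by (simp add: fa_empty[OF assms] Limsup_const)

lemma tau_Union: assumes "\<And>j. fa_outer_prob (\<xi> j)" "finite F"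
  shows "tau \<xi> (\<Union>F) \<le> (\<Sum>I\<in>F. tau \<xi> I)"
  using assms(2)
proof (induction F rule: finite_induct)
  case empty then show ?case using tau_empty[OF assms(1)] by simp
next
  case (insert x F)
  have "tau \<xi> (\<Union>(insert x F)) \<le> tau \<xi> x + tau \<xi> (\<Union>F)" using tau_sub[OF assms(1)] by simp
  then show ?case using insert by simp
qed

lemma nbhd_open: "open (nbhd e K)"
proof -
  have "nbhd e K = (\<Union>k\<in>K. ball k e)" unfolding nbhd_def by (auto simp: dist_commute)
  then show ?thesis by auto
qed

lemma nbhd_mono: "e \<le> d \<Longrightarrow> nbhd e K \<subseteq> nbhd d K"
  unfolding nbhd_def by force

lemma diam_ball_le:
  assumes "r > 0" shows "diameter (ball c (r/2) \<inter> S) \<le> r"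
proof (cases "ball c (r/2) \<inter> S = {}")
  case True then show ?thesis using assms by simp
next
  case False
  have "dist x y \<le> r" if "x \<in> ball c (r/2)" "y \<in> ball c (r/2)" for x y
    using that dist_triangle[of x y c] by (auto simp: dist_commute)
  then show ?thesis unfolding diameter_def using False
    by (auto intro!: cSUP_least)
qed

lemma dir1:
  fixes \<xi> :: "nat \<Rightarrow> 'a::metric_space set \<Rightarrow> real" and K :: "'a set"
  assumes "\<And>j. fa_outer_prob (\<xi> j)" and "compact K" and "nu_r \<xi> 1 K = 0"
  shows "((\<lambda>\<epsilon>. tau \<xi> (nbhd \<epsilon> K)) \<longlongrightarrow> 0) (at_right 0)"
proof (rule tendstoI)
  fix \<delta> :: real assume "\<delta> > 0"
  then have "nu_r \<xi> 1 K < ennreal \<delta>" using assms(3) by simp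
  then obtain \<I> where I: "countable \<I>" "\<forall>I\<in>\<I>. open I \<and> diameter I \<le> 1" "K \<subseteq> \<Union>\<I>"
    and lt: "(\<Sum>\<^sub>\<infinity> I\<in>\<I>. ennreal (tau \<xi> I)) < ennreal \<delta>"
    unfolding nu_r_def by (auto simp: Inf_less_iff)
  obtain F where F: "F \<subseteq> \<I>" "finite F" "K \<subseteq> \<Union>F"
    using compactE[OF assms(2) I(3)] I(2) by blast
  obtain e where e: "e > 0" "\<And>x. x \<in> K \<Longrightarrow> \<exists>G\<in>{\<Union>F}. ball x e \<subseteq> G"
  proof -
    have "open (\<Union>F)" using F I(2) by blast
    then show ?thesis using Heine_Borel_lemma[OF assms(2), of "{\<Union>F}"] F(3) that by auto
  qed
  have sub: "nbhd e K \<subseteq> \<Union>F"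
  proof
    fix y assume "y \<in> nbhd e K"
    then obtain k where "k \<in> K" "dist y k < e" unfolding nbhd_def by auto
    then show "y \<in> \<Union>F" using e(2)[of k] by (auto simp: dist_commute)
  qed
  have "ennreal (\<Sum>I\<in>F. tau \<xi> I) = (\<Sum>I\<in>F. ennreal (tau \<xi> I))"
    using tau_nonneg[of \<xi>, OF assms(1)] by (simp add: sum_ennreal)
  also have "\<dots> = (\<Sum>\<^sub>\<infinity> I\<in>F. ennreal (tau \<xi> I))" using F by simp
  also have "\<dots> \<le> (\<Sum>\<^sub>\<infinity> I\<in>\<I>. ennreal (tau \<xi> I))"
    by (rule infsum_mono_neutral) (use F in \<open>auto intro: nonneg_summable_on_complete\<close>)
  finally have "ennreal (\<Sum>I\<in>F. tau \<xi> I) < ennreal \<delta>" using lt by (rule le_less_trans)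
  then have "(\<Sum>I\<in>F. tau \<xi> I) < \<delta>"
    using ennreal_less_iff tau_nonneg[of \<xi>, OF assms(1)] by (simp add: sum_nonneg)
  have "tau \<xi> (nbhd x K) < \<delta>" if "0 < x" "x < e" for x
  proof -
    have "tau \<xi> (nbhd x K) \<le> tau \<xi> (\<Union>F)"
      using nbhd_mono[of x e K] that sub by (intro tau_mono[OF assms(1)]) auto
    also have "\<dots> \<le> (\<Sum>I\<in>F. tau \<xi> I)" using tau_Union[OF assms(1) F(2)] .
    finally show ?thesis using \<open>(\<Sum>I\<in>F. tau \<xi> I) < \<delta>\<close> by simp
  qed
  then show "\<forall>\<^sub>F x in at_right 0. dist (tau \<xi> (nbhd x K)) 0 < \<delta>"
    unfolding eventually_at_right_field
  proof (intro exI[of _ e] conjI allI impI)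
    fix x :: real assume "0 < x" "x < e"
    then show "dist (tau \<xi> (nbhd x K)) 0 < \<delta>"
      using \<open>\<And>x. 0 < x \<Longrightarrow> x < e \<Longrightarrow> tau \<xi> (nbhd x K) < \<delta>\<close> tau_nonneg[of \<xi>, OF assms(1)] by simp
  qed (use e(1) in simp)
qed

lemma dir2:
  fixes \<xi> :: "nat \<Rightarrow> 'a::metric_space set \<Rightarrow> real" and K :: "'a set"
  assumes fa: "\<And>j. fa_outer_prob (\<xi> j)" and "compact K"
    and lim: "((\<lambda>\<epsilon>. tau \<xi> (nbhd \<epsilon> K)) \<longlongrightarrow> 0) (at_right 0)" and "r > 0"
  shows "nu_r \<xi> r K = 0"
proof -
  obtain T where T: "T \<subseteq> K" "finite T" "K \<subseteq> (\<Union>x\<in>T. ball x (r/2))"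
  proof -
    have cov: "K \<subseteq> (\<Union>c\<in>K. ball c (r/2))" using \<open>r > 0\<close> by auto
    show ?thesis using compactE_image[OF assms(2) _ cov] that by blast
  qed
  define N where "N = card T"
  have le: "nu_r \<xi> r K \<le> 0 + ennreal c" if "c > 0" for c
  proof -
    have "c / (N+1) > 0" using that by simp
    then have "\<forall>\<^sub>F x in at_right 0. dist (tau \<xi> (nbhd x K)) 0 < c / (N+1)"
      by (rule tendstoD[OF lim])
    then obtain b where b: "b > 0" "\<And>y. 0 < y \<Longrightarrow> y < b \<Longrightarrow> dist (tau \<xi> (nbhd y K)) 0 < c / (N+1)"
      unfolding eventually_at_right_field by blast
    define \<epsilon> where "\<epsilon> = b / 2"
    have eps: "\<epsilon> > 0" "tau \<xi> (nbhd \<epsilon> K) < c / (N+1)"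
    proof -
      show "\<epsilon> > 0" unfolding \<epsilon>_def using b(1) by simp
      then have "dist (tau \<xi> (nbhd \<epsilon> K)) 0 < c / (N+1)"
        using b(2)[of \<epsilon>] b(1) unfolding \<epsilon>_def by simp
      then show "tau \<xi> (nbhd \<epsilon> K) < c / (N+1)" using tau_nonneg[of \<xi>, OF fa] by simp
    qed
    define \<I> where "\<I> = (\<lambda>x. ball x (r/2) \<inter> nbhd \<epsilon> K) ` T"
    have fin: "finite \<I>" unfolding \<I>_def using T by simp
    have mem: "(\<Sum>\<^sub>\<infinity> I\<in>\<I>. ennreal (tau \<xi> I)) \<in> { (\<Sum>\<^sub>\<infinity> I\<in>\<I>. ennreal (tau \<xi> I)) | \<I>.
       countable \<I> \<and> (\<forall>I\<in>\<I>. open I \<and> diameter I \<le> r) \<and> K \<subseteq> \<Union>\<I> }"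
    proof -
      have "countable \<I>" using fin by (simp add: countable_finite)
      moreover have "\<forall>I\<in>\<I>. open I \<and> diameter I \<le> r"
        unfolding \<I>_def using nbhd_open diam_ball_le[OF \<open>r > 0\<close>] by auto
      moreover have "K \<subseteq> \<Union>\<I>"
      proof
        fix x assume "x \<in> K"
        then obtain t where "t \<in> T" "x \<in> ball t (r/2)" using T(3) by auto
        moreover have "x \<in> nbhd \<epsilon> K" using \<open>x \<in> K\<close> eps(1) unfolding nbhd_def by force
        ultimately show "x \<in> \<Union>\<I>" unfolding \<I>_def by auto
      qed
      ultimately show ?thesis by blast
    qed
    have "nu_r \<xi> r K \<le> (\<Sum>\<^sub>\<infinity> I\<in>\<I>. ennreal (tau \<xi> I))"
      unfolding nu_r_def by (rule Inf_lower[OF mem])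
    also have "\<dots> = (\<Sum>I\<in>\<I>. ennreal (tau \<xi> I))" using fin by simp
    also have "\<dots> = ennreal (\<Sum>I\<in>\<I>. tau \<xi> I)"
      using tau_nonneg[of \<xi>, OF fa] by (simp add: sum_ennreal)
    also have "\<dots> \<le> ennreal c"
    proof (rule ennreal_leI)
      have "(\<Sum>I\<in>\<I>. tau \<xi> I) \<le> (\<Sum>x\<in>T. tau \<xi> (ball x (r/2) \<inter> nbhd \<epsilon> K))"
        unfolding \<I>_def using sum_image_le[of T "tau \<xi>" "\<lambda>x. ball x (r/2) \<inter> nbhd \<epsilon> K"] T tau_nonneg[of \<xi>, OF fa] by (simp add: o_def)
      also have "\<dots> \<le> (\<Sum>x\<in>T. tau \<xi> (nbhd \<epsilon> K))"
        by (intro sum_mono tau_mono[of \<xi>, OF fa]) auto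
      also have "\<dots> = N * tau \<xi> (nbhd \<epsilon> K)" unfolding N_def by simp
      also have "\<dots> \<le> N * (c / (N+1))"
        using eps(2) by (intro mult_left_mono) auto
      also have "\<dots> \<le> c" using that by (simp add: field_simps)
      finally show "(\<Sum>I\<in>\<I>. tau \<xi> I) \<le> c" .
    qed
    finally show ?thesis by simp
  qed
  then have "nu_r \<xi> r K \<le> 0" by (intro ennreal_le_epsilon[where y=0 and x="nu_r \<xi> r K"] le)
  then show ?thesis by simp
qed

theorem mainTheorem10:
  fixes \<xi> :: "nat \<Rightarrow> 'a::metric_space set \<Rightarrow> real" and K :: "'a set"
  assumes "compact (UNIV :: 'a set)"
    and "\<And>j. fa_outer_prob (\<xi> j)"
    and "compact K"
  shows "eta \<xi> K = 0 \<longleftrightarrow> ((\<lambda>\<epsilon>. tau \<xi> (nbhd \<epsilon> K)) \<longlongrightarrow> 0) (at_right 0)"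
proof -
  have "K \<in> sets borel" using assms(3) compact_imp_closed borel_closed by auto
  then have eq: "eta \<xi> K = nu \<xi> K" unfolding eta_def by simp
  show ?thesis
  proof
    assume "eta \<xi> K = 0"
    then have "nu \<xi> K = 0" using eq by simp
    then have "nu_r \<xi> 1 K \<le> 0" unfolding nu_def
      by (metis SUP_upper greaterThan_iff zero_less_one)
    then have "nu_r \<xi> 1 K = 0" by simp
    then show "((\<lambda>\<epsilon>. tau \<xi> (nbhd \<epsilon> K)) \<longlongrightarrow> 0) (at_right 0)"
      using dir1[of \<xi> K, OF assms(2) assms(3)] by blast
  next
    assume lim: "((\<lambda>\<epsilon>. tau \<xi> (nbhd \<epsilon> K)) \<longlongrightarrow> 0) (at_right 0)"
    have "nu \<xi> K = 0" unfolding nu_def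
      using dir2[of \<xi> K, OF assms(2) assms(3) lim] by simp
    then show "eta \<xi> K = 0" using eq by simp
  qed
qed

end
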